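(* Let $n,k$ be positive integers and $t$ a real number with $2k<n\leq tk$. Let $h(n,k)=\binom{n-1}{k-1}-\binom{n-k-1}{k-1}+1$. Then \[ \frac{h(n,k)^2}{\binom{n-1}{k-1}^2}>1-2\left(\frac{2t-3}{2t-1}\right)^{k-1}. \] *)

theory Defs
  imports Complex_Main
begin

definition h :: "nat \<Rightarrow> nat \<Rightarrow> nat" where
  "h n k = ((n - 1) choose (k - 1)) - ((n - k - 1) choose (k - 1)) + 1"

end

theory Submission
  imports Defs
begin

lemma pair_bound:
  fixes x y m kk :: real
  assumes "kk > 0" "x \<ge> kk" "y \<ge> kk" "x + y = 2 * m"
  shows "((x - kk) / x) * ((y - kk) / y) \<le> ((m - kk) / m)^2"
proof -
  define d where "d = y - m"
  have x: "x = m - d" and y: "y = m + d" using assms(4) d_def by auto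
  have mpos: "m > 0" using assms by linarith
  have xp: "x > 0" "y > 0" using assms by auto
  have "(x - kk) * (y - kk) * m^2 \<le> (m - kk)^2 * (x * y)"
  proof -
    have "(m - kk)^2 * (x * y) - (x - kk) * (y - kk) * m^2 = d^2 * (m^2 - (m-kk)^2)"
      unfolding x y by (simp add: power2_eq_square algebra_simps)
    moreover have "m^2 - (m-kk)^2 \<ge> 0"
      using assms mpos by (simp add: power2_eq_square algebra_simps)
    moreover have "d^2 * (m^2 - (m-kk)^2) \<ge> 0"
      using \<open>m^2 - (m-kk)^2 \<ge> 0\<close> by (simp add: mult_nonneg_nonneg)
    ultimately show ?thesis by linarith
  qed
  then show ?thesis using xp mpos
    by (simp add: field_simps power2_eq_square)
qed

theorem proposition1p8:
  fixes n k :: nat and t :: real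
  assumes "n > 0" "k > 0" "2 * k < n" "real n \<le> t * real k"
  shows "(real (h n k))\<^sup>2 / (real ((n - 1) choose (k - 1)))\<^sup>2
           > 1 - 2 * ((2 * t - 3) / (2 * t - 1)) ^ (k - 1)"
proof -
  define K where "K = k - 1"
  define A where "A = (n - 1) choose (k - 1)"
  define B where "B = (n - k - 1) choose (k - 1)"
  define f where "f = (\<lambda>i::nat. (real n - 1 - real i - real k) / (real n - 1 - real i))"
  define m where "m = real n - real k / 2"
  define g where "g = (m - real k) / m"
  define r where "r = (2 * t - 3) / (2 * t - 1)"
  have kK: "k = K + 1" using assms K_def by auto
  have hA: "real A = (\<Prod>i<K. real (n - 1 - i) / real (K - i))"
    unfolding A_def K_def using assms
    by (subst binomial_altdef_of_nat) (auto simp: atLeast0LessThan)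
  have hB: "real B = (\<Prod>i<K. real (n - k - 1 - i) / real (K - i))"
  proof -
    have "K \<le> n - k - 1" using assms K_def by simp
    from binomial_altdef_of_nat[OF this, where 'a=real] show ?thesis
      unfolding B_def K_def by (simp add: atLeast0LessThan)
  qed
  have Apos: "real A > 0" unfolding A_def using assms by simp
  have BA: "real B / real A = prod f {..<K}"
    unfolding hA hB f_def prod_dividef[symmetric]
  proof (rule prod.cong[OF refl])
    fix i assume i: "i \<in> {..<K}"
    have "real (n - k - 1 - i) = real n - 1 - real i - real k"
      using i kK assms by (simp add: of_nat_diff)
    moreover have "real (n - 1 - i) = real n - 1 - real i"
      using i kK assms by (simp add: of_nat_diff)
    moreover have "real (K - i) > 0" using i by simp
    moreover have "\<And>a b c::real. c \<noteq> 0 \<Longrightarrow> a / c / (b / c) = a / b"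
      by (simp add: field_simps)
    ultimately show "real (n - k - 1 - i) / real (K - i) / (real (n - 1 - i) / real (K - i))
        = (real n - 1 - real i - real k) / (real n - 1 - real i)"
      by simp
  qed
  have fnn: "f i \<ge> 0" if "i < K" for i
    unfolding f_def using that kK assms by (intro divide_nonneg_nonneg) auto
  have mpos: "m > 0" unfolding m_def using assms by simp
  have gnn: "g \<ge> 0" unfolding g_def m_def using assms by (intro divide_nonneg_nonneg) auto
  have fpair: "f i * f (K - Suc i) \<le> g^2" if "i < K" for i
    unfolding f_def g_def
  proof (rule pair_bound)
    show "real k > 0" using assms by simp
    show "real n - 1 - real i \<ge> real k" using that kK assms by simp
    show "real n - 1 - real (K - Suc i) \<ge> real k" using that kK assms by (simp add: of_nat_diff)
    show "real n - 1 - real i + (real n - 1 - real (K - Suc i)) = 2 * m"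
      using that kK unfolding m_def by (simp add: of_nat_diff field_simps)
  qed
  have "(prod f {..<K})^2 = (\<Prod>i<K. f i * f (K - Suc i))"
  proof -
    have "prod f {..<K} = (\<Prod>i<K. f (K - Suc i))" by (rule prod.nat_diff_reindex[symmetric])
    hence "(prod f {..<K})^2 = prod f {..<K} * (\<Prod>i<K. f (K - Suc i))"
      by (simp only: power2_eq_square)
    also have "\<dots> = (\<Prod>i<K. f i * f (K - Suc i))" by (rule prod.distrib[symmetric])
    finally show ?thesis .
  qed
  also have "\<dots> \<le> (\<Prod>i<K. g^2)"
    by (rule prod_mono) (use fpair fnn in \<open>auto intro: mult_nonneg_nonneg\<close>)
  also have "\<dots> = (g^K)^2" by (simp only: prod_constant card_lessThan) (metis power_mult mult.commute)
  finally have P: "prod f {..<K} \<le> g^K"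
    by (rule power2_le_imp_le) (use gnn in simp)
  have tpos: "2 * t - 1 > 0"
  proof -
    have "real n \<ge> 2 * real k + 1" using assms by linarith
    with assms have "t * real k > 2 * real k" by linarith
    hence "t > 2" using assms by (simp add: mult_less_cancel_right)
    thus ?thesis by simp
  qed
  have gr: "g \<le> r"
  proof -
    have g1: "g = 1 - real k / m"
      unfolding g_def using mpos by (simp add: diff_divide_distrib)
    have r1: "r = 1 - 2 / (2 * t - 1)"
    proof -
      have "(2 * t - 3) / (2 * t - 1) = ((2 * t - 1) - 2) / (2 * t - 1)" by simp
      also have "\<dots> = (2 * t - 1) / (2 * t - 1) - 2 / (2 * t - 1)" by (rule diff_divide_distrib)
      also have "\<dots> = 1 - 2 / (2 * t - 1)" using tpos by simp
      finally show ?thesis unfolding r_def .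
    qed
    have km: "2 * m \<le> real k * (2 * t - 1)" unfolding m_def using assms
      by (simp add: algebra_simps)
    have "2 / (2 * t - 1) \<le> real k / m"
      using km tpos mpos by (simp add: frac_le_eq divide_le_eq le_divide_eq mult.commute)
    then show ?thesis unfolding g1 r1 by linarith
  qed
  have x: "real B / real A \<le> r^K"
  proof -
    have "g^K \<le> r^K" by (rule power_mono[OF gr gnn])
    with P have "prod f {..<K} \<le> r^K" by (rule order_trans)
    then show ?thesis unfolding BA .
  qed
  have BleA: "B \<le> A" unfolding A_def B_def by (rule binomial_right_mono) simp
  have hh: "real (h n k) = real A - real B + 1"
    unfolding h_def A_def[symmetric] B_def[symmetric] using BleA by (simp add: of_nat_diff)
  define y where "y = real B / real A"
  have y1: "y \<le> 1" unfolding y_def using BleA Apos by (simp add: divide_le_eq)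
  have "real (h n k) / real A = real A / real A - y + 1 / real A"
    unfolding hh y_def by (simp only: add_divide_distrib diff_divide_distrib)
  hence "real (h n k) / real A = 1 - y + 1 / real A" using Apos by simp
  moreover have "1 / real A > 0" using Apos by simp
  ultimately have q: "real (h n k) / real A > 1 - y" by linarith
  have "(real (h n k))\<^sup>2 / (real A)\<^sup>2 = (real (h n k) / real A)^2" by (simp add: power_divide)
  also have "\<dots> > (1 - y)^2"
    using q y1 by (intro power_strict_mono) auto
  finally have c1: "(real (h n k))\<^sup>2 / (real A)\<^sup>2 > (1 - y)^2" .
  have "(1 - y)^2 = 1 - 2 * y + y^2" by (simp add: power2_diff)
  moreover have "y^2 \<ge> 0" by simp
  ultimately have "(real (h n k))\<^sup>2 / (real A)\<^sup>2 > 1 - 2 * y" using c1 by linarith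
  moreover have "y \<le> r^(k-1)" using x y_def K_def by simp
  ultimately show ?thesis unfolding A_def r_def by linarith
qed

end
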